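(* Let $H\Gamma=(C,\{\mathcal W,\mathcal X,\mathcal Y,\mathcal Z\},G_{zx},G_{wy})$ be a Lagrangian hypercube diagram. Then $H\Gamma$ determines an immersed torus $i:T=S^1\times S^1\to\mathbb{R}^4$ which is Lagrangian with respect to $\omega=dw\wedge dy+dz\wedge dx$; moreover the loops $\gamma_{zx}=S^1\times\{1\}$ and $\gamma_{wy}=\{1\}\times S^1$ map under $i$ to curves projecting to the Lagrangian grid diagrams $G_{zx}$ and $G_{wy}$ respectively.
   Context: Grid conventions. In a plane with coordinates $(a,b)$ (below $(a,b)=(w,y)$ or $(a,b)=(z,x)$), an immersed grid diagram of size $n$ is an $n\times n$ grid of unit cells in $[0,n]^2$ with two kinds of markings at centers of cells, each row and each column containing exactly one marking of each kind; joining each marking of the first kind to the marking of the second kind in its row by an $a$-parallel segment, and each marking of the second kind to the marking of the first kind in its column by a $b$-parallel segment, gives an oriented connected closed piecewise-linear curve, with no crossing information, viewed as an immersion $\gamma:\mathbb{R}/2\pi\mathbb{Z}\to\mathbb{R}^2$, $\theta\mapsto(a(\theta),b(\theta))$. It is a Lagrangian grid diagram if (1) $\int_0^{2\pi}b\,a'\,d\theta=0$ and (2) $\int_{\theta_0}^{\theta_1}b\,a'\,d\theta\neq0$ whenever $\theta_0\neq\theta_1$ and $\gamma(\theta_0)=\gamma(\theta_1)$. For a crossing $c=\gamma(\theta_0)=\gamma(\theta_1)$ put $|\Delta t(c)|=|\int_{\theta_0}^{\theta_1}b\,a'\,d\theta|$. Hypercube diagrams. Let $C=[0,n]^4$ with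 coordinates $(w,x,y,z)$. A flat is a product in which two coordinates range over $[0,n]$ and the other two over unit intervals $[k,k+1]$, named by its two full coordinates; a cube is a product in which three coordinates range over $[0,n]$ and one over a unit interval. Markings are points with coordinates in $\mathbb{Z}+\frac12$ labelled $W,X,Y,Z$. Marking conditions: each cube contains exactly one marking of each label; each cube contains exactly two flats containing exactly three markings; in each such flat the three markings form a right angle with rays parallel to coordinate axes; its vertex is $W$ iff the flat is a $zw$-flat, $X$ iff a $wx$-flat, $Y$ iff an $xy$-flat, $Z$ iff a $yz$-flat. Join each $W$ to an $X$ by a $w$-parallel segment, each $X$ to a $Y$ by an $x$-parallel segment, each $Y$ to a $Z$ by a $y$-parallel segment and each $Z$ to a $W$ by a $z$-parallel segment; the projections of this curve to the $(w,y)$- and $(z,x)$-planes are immersed grid diagrams $G_{wy}$ ($(a,b)=(w,y)$) and $G_{zx}$ ($(a,b)=(z,x)$). $H\Gamma$ is a Lagrangian hypercube diagram if the marking conditions hold, $G_{wy},G_{zx}$ are Lagrangian grid diagrams, and $|\Delta t(c)|\neq|\Delta t(c')|$ for all crossings $c$ of $G_{zx}$ and $c'$ of $G_{wy}$. The torus determined by $H\Gamma$ is obtained by placing a copy of $G_{zx}$ in each $zx$-flat whose $(w,y)$-cell contains a marking of $G_{wy}$ and joining these copies by the tubes swept out by translating them parallel to the $w$- and $y$-axes along the edges of $G_{wy}$; i.e. with $G_{zx}$ parametrized by $s\mapsto(z(s),x(s))$ and $G_{wy}$ by $u\mapsto(w(u),y(u))$, $i(s,u)=(w(u),x(s),y(u),z(s))$.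 *)

theory Defs
  imports "HOL-Analysis.Analysis"
begin

type_synonym pt4 = "real \<times> real \<times> real \<times> real"

datatype axis = Aw | Ax | Ay | Az

datatype label = LW | LX | LY | LZ

definition coord :: "pt4 \<Rightarrow> axis \<Rightarrow> real" where
  "coord p a = (case p of (w, x, y, z) \<Rightarrow>
     (case a of Aw \<Rightarrow> w | Ax \<Rightarrow> x | Ay \<Rightarrow> y | Az \<Rightarrow> z))"

definition is_center :: "nat \<Rightarrow> real \<Rightarrow> bool" where
  "is_center n t \<longleftrightarrow> (\<exists>k::nat. k < n \<and> t = real k + 1/2)"

definition markings :: "(label \<Rightarrow> pt4 set) \<Rightarrow> (label \<times> pt4) set" where
  "markings M = {(l, p). p \<in> M l}"

text \<open>Labelled markings in the flat where axis a ranges over [k,k+1] and axis b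
  over [j,j+1] (the other two axes range over [0,n]).\<close>
definition flat_marks ::
  "(label \<Rightarrow> pt4 set) \<Rightarrow> axis \<Rightarrow> nat \<Rightarrow> axis \<Rightarrow> nat \<Rightarrow> (label \<times> pt4) set" where
  "flat_marks M a k b j =
     {(l, p) \<in> markings M. coord p a = real k + 1/2 \<and> coord p b = real j + 1/2}"

text \<open>The two full axes of the flat of the vertex of the right angle:
  W: zw-flat, X: wx-flat, Y: xy-flat, Z: yz-flat.\<close>
fun vertex_axes :: "label \<Rightarrow> axis set" where
  "vertex_axes LW = {Az, Aw}"
| "vertex_axes LX = {Aw, Ax}"
| "vertex_axes LY = {Ax, Ay}"
| "vertex_axes LZ = {Ay, Az}"

definition right_angle :: "pt4 \<Rightarrow> pt4 \<Rightarrow> pt4 \<Rightarrow> axis \<Rightarrow> axis \<Rightarrow> bool" where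
  "right_angle v p q c d \<longleftrightarrow> p \<noteq> v \<and> q \<noteq> v \<and>
     (\<forall>e. e \<noteq> c \<longrightarrow> coord p e = coord v e) \<and>
     (\<forall>e. e \<noteq> d \<longrightarrow> coord q e = coord v e)"

definition marking_conditions :: "nat \<Rightarrow> (label \<Rightarrow> pt4 set) \<Rightarrow> bool" where
  "marking_conditions n M \<longleftrightarrow>
     (\<forall>l. \<forall>p \<in> M l. \<forall>a. is_center n (coord p a)) \<and>
     \<comment> \<open>each cube contains exactly one marking of each label\<close>
     (\<forall>a k l. k < n \<longrightarrow> card {p \<in> M l. coord p a = real k + 1/2} = 1) \<and>
     \<comment> \<open>each cube contains exactly two flats containing exactly three markings\<close>
     (\<forall>a k. k < n \<longrightarrow>
        card {(b, j). b \<noteq> a \<and> j < n \<and> card (flat_marks M a k b j) = 3} = 2) \<and>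
     \<comment> \<open>in each such flat the markings form a right angle with the prescribed vertex\<close>
     (\<forall>a k b j. a \<noteq> b \<and> k < n \<and> j < n \<and> card (flat_marks M a k b j) = 3 \<longrightarrow>
        (\<exists>l v l1 p1 l2 p2 c d.
           flat_marks M a k b j = {(l, v), (l1, p1), (l2, p2)} \<and>
           c \<noteq> d \<and> - {a, b} = {c, d} \<and> vertex_axes l = {c, d} \<and>
           right_angle v p1 p2 c d))"

definition label_of :: "nat \<Rightarrow> label" where
  "label_of j = (case j mod 4 of 0 \<Rightarrow> LW | Suc 0 \<Rightarrow> LX | Suc (Suc 0) \<Rightarrow> LY | _ \<Rightarrow> LZ)"

definition axis_of :: "nat \<Rightarrow> axis" where
  "axis_of j = (case j mod 4 of 0 \<Rightarrow> Aw | Suc 0 \<Rightarrow> Ax | Suc (Suc 0) \<Rightarrow> Ay | _ \<Rightarrow> Az)"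

text \<open>v 0, v 1, ..., v (4n-1) is the cyclic (oriented) order in which the closed curve
  W -> X -> Y -> Z -> W -> ... visits the markings: every labelled marking is visited
  exactly once, and v j is joined to v (j+1) by a segment parallel to the w-, x-, y-
  or z-axis according as v j is a W, X, Y or Z marking.\<close>
definition hc_cycle :: "nat \<Rightarrow> (label \<Rightarrow> pt4 set) \<Rightarrow> (nat \<Rightarrow> pt4) \<Rightarrow> bool" where
  "hc_cycle n M v \<longleftrightarrow> 0 < n \<and>
     bij_betw (\<lambda>j. (label_of j, v j)) {..<4*n} (markings M) \<and>
     (\<forall>j < 4*n. \<forall>e. e \<noteq> axis_of j \<longrightarrow> coord (v ((j + 1) mod (4*n))) e = coord (v j) e)"

text \<open>An immersed grid diagram of size n is
  given by the cyclic vertex sequence g 0, ..., g (2n-1) of its curve: g (2j) are the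
  markings of the first kind, g (2j+1) those of the second kind; g (2j) is joined to
  g (2j+1) by an a-parallel segment (same row) and g (2j+1) to g (2j+2) by a
  b-parallel segment (same column).\<close>
definition grid_diagram :: "nat \<Rightarrow> (nat \<Rightarrow> real \<times> real) \<Rightarrow> bool" where
  "grid_diagram n g \<longleftrightarrow> 0 < n \<and>
     (\<forall>k < 2*n. is_center n (fst (g k)) \<and> is_center n (snd (g k))) \<and>
     (\<forall>j < n. snd (g (2*j+1)) = snd (g (2*j)) \<and>
              fst (g ((2*j+2) mod (2*n))) = fst (g (2*j+1))) \<and>
     (\<forall>i < n. card {j. j < n \<and> snd (g (2*j)) = real i + 1/2} = 1 \<and>
              card {j. j < n \<and> snd (g (2*j+1)) = real i + 1/2} = 1 \<and>
              card {j. j < n \<and> fst (g (2*j)) = real i + 1/2} = 1 \<and>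
              card {j. j < n \<and> fst (g (2*j+1)) = real i + 1/2} = 1)"

definition circ_rep :: "real \<Rightarrow> real" where
  "circ_rep \<theta> = \<theta> - 2*pi * of_int \<lfloor>\<theta> / (2*pi)\<rfloor>"

definition pl_curve :: "nat \<Rightarrow> (nat \<Rightarrow> real \<times> real) \<Rightarrow> real \<Rightarrow> real \<times> real" where
  "pl_curve N g \<theta> =
     (let t = circ_rep \<theta> * real N / (2*pi); j = nat \<lfloor>t\<rfloor>; f = t - real j
      in (1 - f) *\<^sub>R g j + f *\<^sub>R g ((j + 1) mod N))"

definition area_int :: "(real \<Rightarrow> real \<times> real) \<Rightarrow> real \<Rightarrow> real \<Rightarrow> real" where
  "area_int \<gamma> \<theta>0 \<theta>1 = integral {\<theta>0..\<theta>1} (\<lambda>\<theta>. snd (\<gamma> \<theta>) * deriv (\<lambda>t. fst (\<gamma> t)) \<theta>)"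

definition lagrangian_grid :: "nat \<Rightarrow> (nat \<Rightarrow> real \<times> real) \<Rightarrow> bool" where
  "lagrangian_grid n g \<longleftrightarrow> grid_diagram n g \<and>
     area_int (pl_curve (2*n) g) 0 (2*pi) = 0 \<and>
     (\<forall>\<theta>0 \<theta>1. 0 \<le> \<theta>0 \<and> \<theta>0 < \<theta>1 \<and> \<theta>1 < 2*pi \<and>
        pl_curve (2*n) g \<theta>0 = pl_curve (2*n) g \<theta>1 \<longrightarrow>
        area_int (pl_curve (2*n) g) \<theta>0 \<theta>1 \<noteq> 0)"

definition crossing_gap :: "(real \<Rightarrow> real \<times> real) \<Rightarrow> real \<Rightarrow> bool" where
  "crossing_gap \<gamma> d \<longleftrightarrow> (\<exists>\<theta>0 \<theta>1. 0 \<le> \<theta>0 \<and> \<theta>0 < \<theta>1 \<and> \<theta>1 < 2*pi \<and>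
     \<gamma> \<theta>0 = \<gamma> \<theta>1 \<and> d = \<bar>area_int \<gamma> \<theta>0 \<theta>1\<bar>)"

definition proj_wy :: "pt4 \<Rightarrow> real \<times> real" where
  "proj_wy p = (coord p Aw, coord p Ay)"

definition proj_zx :: "pt4 \<Rightarrow> real \<times> real" where
  "proj_zx p = (coord p Az, coord p Ax)"

text \<open>Vertices of G_wy: W markings (first kind, projections of W = Z) and
  X markings (second kind, projections of X = Y).\<close>
definition gwy_vertices :: "nat \<Rightarrow> (nat \<Rightarrow> pt4) \<Rightarrow> nat \<Rightarrow> real \<times> real" where
  "gwy_vertices n v k = proj_wy (v ((2*k) mod (4*n)))"

text \<open>Vertices of G_zx: Y markings (first kind, projections of Y = Z) and
  W markings (second kind, projections of W = X).\<close>
definition gzx_vertices :: "nat \<Rightarrow> (nat \<Rightarrow> pt4) \<Rightarrow> nat \<Rightarrow> real \<times> real" where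
  "gzx_vertices n v k = proj_zx (v ((2*k + 2) mod (4*n)))"

definition gamma_wy :: "nat \<Rightarrow> (nat \<Rightarrow> pt4) \<Rightarrow> real \<Rightarrow> real \<times> real" where
  "gamma_wy n v = pl_curve (2*n) (gwy_vertices n v)"

definition gamma_zx :: "nat \<Rightarrow> (nat \<Rightarrow> pt4) \<Rightarrow> real \<Rightarrow> real \<times> real" where
  "gamma_zx n v = pl_curve (2*n) (gzx_vertices n v)"

definition lagrangian_hypercube :: "nat \<Rightarrow> (label \<Rightarrow> pt4 set) \<Rightarrow> (nat \<Rightarrow> pt4) \<Rightarrow> bool" where
  "lagrangian_hypercube n M v \<longleftrightarrow>
     marking_conditions n M \<and> hc_cycle n M v \<and>
     lagrangian_grid n (gwy_vertices n v) \<and> lagrangian_grid n (gzx_vertices n v) \<and>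
     (\<forall>d. crossing_gap (gamma_zx n v) d \<longrightarrow> \<not> crossing_gap (gamma_wy n v) d)"

text \<open>i(s,u) = (w(u), x(s), y(u), z(s)) where gamma_zx s = (z(s), x(s)) and
  gamma_wy u = (w(u), y(u)); (s,u) in R^2 modulo (2 pi Z)^2.\<close>
definition hc_torus :: "(real \<Rightarrow> real \<times> real) \<Rightarrow> (real \<Rightarrow> real \<times> real) \<Rightarrow> real \<times> real \<Rightarrow> pt4" where
  "hc_torus gzx gwy su = (case su of (s, u) \<Rightarrow>
     (fst (gwy u), snd (gzx s), snd (gwy u), fst (gzx s)))"

definition omega :: "pt4 \<Rightarrow> pt4 \<Rightarrow> real" where
  "omega p q = coord p Aw * coord q Ay - coord p Ay * coord q Aw
             + coord p Az * coord q Ax - coord p Ax * coord q Az"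

end

theory Submission
  imports Defs
begin

definition GG :: "nat \<Rightarrow> (nat \<Rightarrow> real \<times> real) \<Rightarrow> int \<Rightarrow> real \<times> real" where
  "GG N g j = g (nat (j mod int N))"

definition PP :: "nat \<Rightarrow> (nat \<Rightarrow> real \<times> real) \<Rightarrow> real \<Rightarrow> real \<times> real" where
  "PP N g t = GG N g \<lfloor>t\<rfloor> + (t - of_int \<lfloor>t\<rfloor>) *\<^sub>R (GG N g (\<lfloor>t\<rfloor> + 1) - GG N g \<lfloor>t\<rfloor>)"

lemma circ_rep_bounds: "0 \<le> circ_rep \<theta>" "circ_rep \<theta> < 2*pi"
proof -
  have p: "2*pi > 0" by simp
  have a: "of_int \<lfloor>\<theta> / (2*pi)\<rfloor> \<le> \<theta> / (2*pi)" by (rule of_int_floor_le)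
  have b: "\<theta> / (2*pi) < of_int \<lfloor>\<theta> / (2*pi)\<rfloor> + 1" by (rule real_of_int_floor_add_one_gt)
  have "2*pi * of_int \<lfloor>\<theta> / (2*pi)\<rfloor> \<le> 2*pi * (\<theta> / (2*pi))" using a p by (intro mult_left_mono) auto
  then have "2*pi * of_int \<lfloor>\<theta> / (2*pi)\<rfloor> \<le> \<theta>" by simp
  then show "0 \<le> circ_rep \<theta>" by (simp add: circ_rep_def)
  have "2*pi * (\<theta> / (2*pi)) < 2*pi * (of_int \<lfloor>\<theta> / (2*pi)\<rfloor> + 1)" using b p by (intro mult_strict_left_mono) auto
  then have "\<theta> < 2*pi * of_int \<lfloor>\<theta> / (2*pi)\<rfloor> + 2*pi" by (simp add: algebra_simps)
  then show "circ_rep \<theta> < 2*pi" by (simp add: circ_rep_def)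
qed

lemma PP_floor:
  assumes "\<lfloor>t\<rfloor> = j"
  shows "PP N g t = GG N g j + (t - of_int j) *\<^sub>R (GG N g (j + 1) - GG N g j)"
  using assms by (simp add: PP_def)

lemma PP_interval:
  assumes "of_int j \<le> t" "t \<le> of_int j + 1"
  shows "PP N g t = GG N g j + (t - of_int j) *\<^sub>R (GG N g (j + 1) - GG N g j)"
proof (cases "t = of_int j + 1")
  case True
  then have "\<lfloor>t\<rfloor> = j + 1" by simp
  then show ?thesis using True by (simp add: PP_def algebra_simps)
next
  case False
  then have "\<lfloor>t\<rfloor> = j" using assms by (simp add: floor_eq_iff)
  then show ?thesis by (simp add: PP_def)
qed

lemma pl_PP:
  assumes N: "0 < N"
  shows "pl_curve N g \<theta> = PP N g (\<theta> * real N / (2*pi))"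
proof -
  define m where "m = \<lfloor>\<theta> / (2*pi)\<rfloor>"
  define t where "t = \<theta> * real N / (2*pi)"
  define q where "q = \<lfloor>t\<rfloor>"
  have ct: "circ_rep \<theta> * real N / (2*pi) = t - of_int (int N * m)"
    by (simp add: circ_rep_def m_def t_def field_simps)
  have fl: "\<lfloor>circ_rep \<theta> * real N / (2*pi)\<rfloor> = q - int N * m"
    unfolding ct q_def by (metis floor_diff_of_int)
  have lo: "0 \<le> circ_rep \<theta> * real N / (2*pi)" using circ_rep_bounds(1)[of \<theta>] by simp
  have hi: "circ_rep \<theta> * real N / (2*pi) < real N"
    using circ_rep_bounds(2)[of \<theta>] N by (simp add: field_simps)
  have k0: "0 \<le> q - int N * m" using lo fl by (metis floor_mono floor_zero)
  have k1: "q - int N * m < int N" using hi fl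
    by (metis floor_less_iff of_int_of_nat_eq)
  have qm: "q mod int N = q - int N * m"
  proof -
    have "q mod int N = (q - int N * m) mod int N" by (simp add: mod_diff_eq[symmetric])
    also have "\<dots> = q - int N * m" using k0 k1 by simp
    finally show ?thesis .
  qed
  define j where "j = nat (q - int N * m)"
  have jr: "real j = of_int q - real N * of_int m" using k0 by (simp add: j_def)
  have j1: "(j + 1) mod N = nat ((q + 1) mod int N)"
  proof -
    have "int ((j + 1) mod N) = (int j + 1) mod int N" by (simp add: zmod_int add.commute)
    also have "\<dots> = (q mod int N + 1) mod int N" using k0 qm by (simp add: j_def)
    also have "\<dots> = (q + 1) mod int N" by (simp add: mod_add_left_eq)
    finally show ?thesis by linarith
  qed
  have f: "circ_rep \<theta> * real N / (2*pi) - real j = t - of_int q" by (simp add: ct jr)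
  have "pl_curve N g \<theta> = (1 - (circ_rep \<theta> * real N / (2*pi) - real j)) *\<^sub>R g j + (circ_rep \<theta> * real N / (2*pi) - real j) *\<^sub>R g ((j + 1) mod N)"
    unfolding pl_curve_def Let_def fl j_def by simp
  then have "pl_curve N g \<theta> = (1 - (t - of_int q)) *\<^sub>R g j + (t - of_int q) *\<^sub>R g ((j + 1) mod N)"
    by (simp only: f)
  also have "\<dots> = PP N g t"
  proof -
    have g1: "GG N g q = g j" by (simp add: GG_def qm j_def)
    have g2: "GG N g (q + 1) = g ((j + 1) mod N)" by (simp only: GG_def j1)
    show ?thesis unfolding PP_def q_def[symmetric] g1 g2 by (simp add: algebra_simps)
  qed
  finally show ?thesis by (simp add: t_def)
qed

lemma GG_nat: "k < N \<Longrightarrow> GG N g (int k) = g k"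
  by (simp add: GG_def)

lemma GG_nat1: "GG N g (int k + 1) = g ((k + 1) mod N)"
proof -
  have "(int k + 1) mod int N = int ((k+1) mod N)" by (simp add: zmod_int add.commute)
  then show ?thesis by (simp add: GG_def)
qed

lemma GG_mod: "GG N g (j mod int N) = GG N g j"
  by (simp add: GG_def)

lemma nondeg:
  assumes L: "lagrangian_grid n g" and k: "k < 2*n"
  shows "g k \<noteq> g ((k + 1) mod (2*n))"
proof
  assume eq: "g k = g ((k + 1) mod (2*n))"
  define N where "N = 2*n"
  have N: "0 < N" using k by (simp add: N_def)
  define \<gamma> where "\<gamma> = pl_curve N g"
  define \<theta>0 where "\<theta>0 = 2*pi*real k / real N"
  define \<theta>1 where "\<theta>1 = \<theta>0 + pi / real N"
  define \<theta>2 where "\<theta>2 = \<theta>0 + 2*pi / real N"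
  have const: "\<gamma> \<theta> = g k" if "\<theta>0 \<le> \<theta>" "\<theta> \<le> \<theta>2" for \<theta>
  proof -
    have a: "real k \<le> \<theta> * real N / (2*pi)" using that N
      by (simp add: \<theta>0_def field_simps)
    have b: "\<theta> * real N / (2*pi) \<le> real k + 1" using that N
      by (simp add: \<theta>2_def \<theta>0_def field_simps)
    have "\<gamma> \<theta> = PP N g (\<theta> * real N / (2*pi))" by (simp add: \<gamma>_def pl_PP[OF N])
    also have "\<dots> = GG N g (int k)"
      using PP_interval[of "int k" "\<theta> * real N / (2*pi)" N g] a b
      using GG_nat[of k N g] GG_nat1[of N g k] eq k by (simp add: N_def)
    also have "\<dots> = g k" using k by (simp add: GG_nat N_def)
    finally show ?thesis .
  qed
  have o1: "\<theta>0 < \<theta>1" "\<theta>1 < \<theta>2" using N by (simp_all add: \<theta>1_def \<theta>2_def divide_strict_right_mono)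
  have o0: "0 \<le> \<theta>0" by (simp add: \<theta>0_def)
  have o2: "\<theta>1 < 2*pi"
  proof -
    have "real k + 1/2 < real N" using k by (simp add: N_def)
    then have "2*pi*(real k + 1/2) < 2*pi*real N" by simp
    then show ?thesis using N by (simp add: \<theta>1_def \<theta>0_def field_simps)
  qed
  have same: "\<gamma> \<theta>0 = \<gamma> \<theta>1" using const o1 by auto
  have der: "deriv (\<lambda>t. fst (\<gamma> t)) \<theta> = 0" if "\<theta> \<in> {\<theta>0<..<\<theta>2}" for \<theta>
  proof -
    have "((\<lambda>t. fst (g k)) has_field_derivative 0) (at \<theta>)" by simp
    then have "((\<lambda>t. fst (\<gamma> t)) has_field_derivative 0) (at \<theta>)"
      by (rule has_field_derivative_transform_within_open[where S="{\<theta>0<..<\<theta>2}"])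
         (use that const in auto)
    then show ?thesis by (rule DERIV_imp_deriv)
  qed
  have "area_int \<gamma> \<theta>0 \<theta>1 = integral {\<theta>0..\<theta>1} (\<lambda>_. 0::real)"
    unfolding area_int_def
  proof (rule integral_spike[where S="{\<theta>0, \<theta>1}"])
    show "negligible {\<theta>0, \<theta>1}" by simp
    fix x assume "x \<in> {\<theta>0..\<theta>1} - {\<theta>0, \<theta>1}"
    then have "x \<in> {\<theta>0<..<\<theta>2}" using o1 by auto
    then show "0 = snd (\<gamma> x) * deriv (\<lambda>t. fst (\<gamma> t)) x" using der by simp
  qed
  then have "area_int \<gamma> \<theta>0 \<theta>1 = 0" by simp
  moreover have "area_int \<gamma> \<theta>0 \<theta>1 \<noteq> 0"
    using L o0 o1 o2 same unfolding lagrangian_grid_def \<gamma>_def N_def by auto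
  ultimately show False by simp
qed

lemma GG_struct_nat:
  assumes L: "lagrangian_grid n g" and k: "k < 2*n"
  shows "(even k \<longrightarrow> snd (g k) = snd (g ((k+1) mod (2*n))) \<and> fst (g k) \<noteq> fst (g ((k+1) mod (2*n))))
       \<and> (odd k \<longrightarrow> fst (g k) = fst (g ((k+1) mod (2*n))) \<and> snd (g k) \<noteq> snd (g ((k+1) mod (2*n))))"
proof -
  have G: "grid_diagram n g" using L by (simp add: lagrangian_grid_def)
  have nd: "g k \<noteq> g ((k + 1) mod (2*n))" by (rule nondeg[OF L k])
  show ?thesis
  proof (intro conjI impI)
    assume "even k"
    then obtain i where i: "k = 2*i" by (auto elim: evenE)
    with k have "i < n" by simp
    then have "snd (g (2*i+1)) = snd (g (2*i))" using G by (simp add: grid_diagram_def)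
    moreover have "(k+1) mod (2*n) = 2*i+1" using i k by simp
    ultimately show "snd (g k) = snd (g ((k+1) mod (2*n)))" using i by simp
    then show "fst (g k) \<noteq> fst (g ((k+1) mod (2*n)))" using nd by (simp add: prod_eq_iff)
  next
    assume "odd k"
    then obtain i where i: "k = 2*i+1" by (auto elim: oddE)
    with k have "i < n" by simp
    then have "fst (g ((2*i+2) mod (2*n))) = fst (g (2*i+1))" using G by (simp add: grid_diagram_def)
    moreover have "(k+1) mod (2*n) = (2*i+2) mod (2*n)" using i by simp
    ultimately show "fst (g k) = fst (g ((k+1) mod (2*n)))" using i by simp
    then show "snd (g k) \<noteq> snd (g ((k+1) mod (2*n)))" using nd by (simp add: prod_eq_iff)
  qed
qed

lemma GG_struct:
  assumes L: "lagrangian_grid n g"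
  shows "(even j \<longrightarrow> snd (GG (2*n) g j) = snd (GG (2*n) g (j+1)) \<and> fst (GG (2*n) g j) \<noteq> fst (GG (2*n) g (j+1)))
       \<and> (odd j \<longrightarrow> fst (GG (2*n) g j) = fst (GG (2*n) g (j+1)) \<and> snd (GG (2*n) g j) \<noteq> snd (GG (2*n) g (j+1)))"
proof -
  have n: "0 < n" using L by (simp add: lagrangian_grid_def grid_diagram_def)
  define k where "k = nat (j mod int (2*n))"
  have kk: "int k = j mod int (2*n)" using n by (simp add: k_def)
  have k: "k < 2*n" using n kk by (metis Euclidean_Rings.pos_mod_bound of_nat_0_less_iff of_nat_less_iff mult_pos_pos zero_less_numeral)
  have g1: "GG (2*n) g j = g k" by (simp add: GG_def k_def)
  have "GG (2*n) g (j+1) = GG (2*n) g (int k + 1)"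
    unfolding GG_def kk by (simp add: mod_add_left_eq)
  then have g2: "GG (2*n) g (j+1) = g ((k+1) mod (2*n))" by (simp add: GG_nat1)
  have par: "even j \<longleftrightarrow> even k"
  proof -
    have e: "j mod int (2*n) = j - 2 * (int n * (j div int (2*n)))"
      by (simp add: minus_div_mult_eq_mod[symmetric] algebra_simps)
    have "even (int k) \<longleftrightarrow> even j" unfolding kk e by simp
    then show ?thesis by simp
  qed
  show ?thesis using GG_struct_nat[OF L k] unfolding g1 g2 par by simp
qed

lemma PP_inj_aux:
  assumes L: "lagrangian_grid n g" and lt: "t1 < t2" "t2 < t1 + 1"
    and eq: "PP (2*n) g t1 = PP (2*n) g t2"
  shows False
proof -
  define j where "j = \<lfloor>t1\<rfloor>"
  define a where "a = GG (2*n) g j"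
  define b where "b = GG (2*n) g (j+1)"
  define c where "c = GG (2*n) g (j+2)"
  define f1 where "f1 = t1 - of_int j"
  have f1: "0 \<le> f1" "f1 < 1" using j_def f1_def by linarith+
  have s1: "j \<in> {j}" by simp
  have P1: "PP (2*n) g t1 = a + f1 *\<^sub>R (b - a)" by (simp add: PP_def a_def b_def f1_def j_def)
  have "\<lfloor>t2\<rfloor> = j \<or> \<lfloor>t2\<rfloor> = j + 1" using lt j_def by linarith
  then show False
  proof
    assume j2: "\<lfloor>t2\<rfloor> = j"
    have P2: "PP (2*n) g t2 = a + (t2 - of_int j) *\<^sub>R (b - a)" by (simp add: PP_def a_def b_def j2)
    have "a \<noteq> b" using GG_struct[OF L, of j] by (auto simp: a_def b_def)
    then have "b - a \<noteq> 0" by simp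
    moreover have "(t2 - of_int j - f1) *\<^sub>R (b - a) = (a + (t2 - of_int j) *\<^sub>R (b - a)) - (a + f1 *\<^sub>R (b - a))"
      by (simp add: algebra_simps)
    then have "(t2 - of_int j - f1) *\<^sub>R (b - a) = 0" using eq P1 P2 by (metis diff_self)
    ultimately have "t2 - of_int j - f1 = 0" by simp
    then show False using lt f1_def by simp
  next
    assume j2: "\<lfloor>t2\<rfloor> = j + 1"
    define f2 where "f2 = t2 - of_int (j+1)"
    have f2: "0 \<le> f2" "f2 < f1" using j2 lt f2_def f1_def by linarith+
    have P2: "PP (2*n) g t2 = b + f2 *\<^sub>R (c - b)"
      by (simp add: PP_def b_def c_def j2 f2_def add.assoc)
    have E: "a + f1 *\<^sub>R (b - a) = b + f2 *\<^sub>R (c - b)" using eq P1 P2 by simp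
    have Efst: "fst a + f1 * (fst b - fst a) = fst b + f2 * (fst c - fst b)"
      using arg_cong[OF E, of fst] by simp
    have Esnd: "snd a + f1 * (snd b - snd a) = snd b + f2 * (snd c - snd b)"
      using arg_cong[OF E, of snd] by simp
    note S1 = GG_struct[OF L, of j] and S2 = GG_struct[OF L, of "j+1"]
    have jj: "j + 1 + 1 = j + 2" by simp
    show False
    proof (cases "even j")
      case True
      then have h: "snd a = snd b" "fst a \<noteq> fst b" "fst b = fst c" "snd b \<noteq> snd c"
        using S1 S2 by (auto simp: a_def b_def c_def jj)
      from Esnd h have "f2 * (snd c - snd b) = 0" by simp
      with h have "f2 = 0" by simp
      with Efst have "(1 - f1) * (fst a - fst b) = 0" by (simp add: algebra_simps)
      with h f1 show False by simp
    next
      case False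
      then have h: "fst a = fst b" "snd a \<noteq> snd b" "snd b = snd c" "fst b \<noteq> fst c"
        using S1 S2 by (auto simp: a_def b_def c_def jj)
      from Efst h have "f2 * (fst c - fst b) = 0" by simp
      with h have "f2 = 0" by simp
      with Esnd have "(1 - f1) * (snd a - snd b) = 0" by (simp add: algebra_simps)
      with h f1 show False by simp
    qed
  qed
qed

lemma PP_inj:
  assumes L: "lagrangian_grid n g" and d: "\<bar>t1 - t2\<bar> < 1"
    and eq: "PP (2*n) g t1 = PP (2*n) g t2"
  shows "t1 = t2"
proof (rule ccontr)
  assume "t1 \<noteq> t2"
  then have "t1 < t2 \<or> t2 < t1" by linarith
  then show False
  proof
    assume "t1 < t2" then show False using PP_inj_aux[OF L _ _ eq] d by simp
  next
    assume "t2 < t1" then show False using PP_inj_aux[OF L _ _ eq[symmetric]] d by simp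
  qed
qed

lemma PP_periodic: "PP N g (t + real N) = PP N g t"
proof -
  have f: "\<lfloor>t + real N\<rfloor> = \<lfloor>t\<rfloor> + int N" by (metis floor_add_int of_int_of_nat_eq)
  have g: "GG N g (j + int N) = GG N g j" for j by (simp add: GG_def)
  have g1: "GG N g (j + int N + 1) = GG N g (j+1)" for j
    using g[of "j+1"] by (simp add: algebra_simps)
  show ?thesis unfolding PP_def f g g1 by (simp add: algebra_simps)
qed

lemma PP_cont: "continuous_on UNIV (PP N g)"
proof (rule continuous_at_imp_continuous_on, intro ballI)
  fix t :: real
  define j where "j = \<lfloor>t\<rfloor>"
  define A where "A = (\<lambda>j t. GG N g j + (t - of_int j) *\<^sub>R (GG N g (j + 1) - GG N g j))"
  have cA: "continuous_on S (A i)" for S i unfolding A_def by (intro continuous_intros)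
  have c1: "continuous_on {of_int (j-1)..of_int j} (PP N g)"
  proof (rule continuous_on_eq[OF cA])
    fix x assume "x \<in> {real_of_int (j - 1)..real_of_int j}"
    then show "A (j-1) x = PP N g x" unfolding A_def by (intro PP_interval[symmetric]) auto
  qed
  have c2: "continuous_on {of_int j..of_int j + 1} (PP N g)"
  proof (rule continuous_on_eq[OF cA])
    fix x assume "x \<in> {real_of_int j..real_of_int j + 1}"
    then show "A j x = PP N g x" unfolding A_def by (intro PP_interval[symmetric]) auto
  qed
  have "continuous_on ({of_int (j-1)..of_int j} \<union> {of_int j..of_int j + 1}) (PP N g)"
    by (rule continuous_on_closed_Un[OF _ _ c1 c2]) auto
  moreover have "{of_int (j-1)..of_int j} \<union> {of_int j..of_int j + 1} = {of_int j - 1..of_int j + (1::real)}"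
    by auto
  ultimately have c: "continuous_on {of_int j - 1..of_int j + (1::real)} (PP N g)" by simp
  have "t \<in> interior {of_int j - 1..of_int j + (1::real)}" using j_def by auto linarith+
  then show "isCont (PP N g) t" by (rule continuous_on_interior[OF c])
qed

lemma PP_affine:
  assumes "t \<in> {of_int j <..< of_int j + 1}"
  shows "PP N g t = GG N g j + (t - of_int j) *\<^sub>R (GG N g (j + 1) - GG N g j)"
  using assms by (intro PP_interval) auto

lemma L_pos: "lagrangian_grid n g \<Longrightarrow> 0 < n"
  by (simp add: lagrangian_grid_def grid_diagram_def)

lemma pl_cont:
  assumes L: "lagrangian_grid n g"
  shows "continuous_on UNIV (pl_curve (2*n) g)"
proof -
  have N: "0 < 2*n" using L_pos[OF L] by simp
  have e: "pl_curve (2*n) g = (\<lambda>\<theta>. PP (2*n) g (\<theta> * real (2*n) / (2*pi)))"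
    by (rule ext) (rule pl_PP[OF N])
  show ?thesis unfolding e
    by (rule continuous_on_compose2[OF PP_cont]) (auto intro!: continuous_intros)
qed

lemma pl_periodic:
  assumes L: "lagrangian_grid n g"
  shows "pl_curve (2*n) g (\<theta> + 2*pi) = pl_curve (2*n) g \<theta>"
proof -
  have N: "0 < 2*n" using L_pos[OF L] by simp
  have "(\<theta> + 2*pi) * real (2*n) / (2*pi) = \<theta> * real (2*n) / (2*pi) + real (2*n)"
    by (simp add: field_simps)
  then show ?thesis by (simp only: pl_PP[OF N] PP_periodic)
qed

lemma pl_inj:
  assumes L: "lagrangian_grid n g" and d: "\<bar>\<theta>1 - \<theta>2\<bar> < 2*pi / real (2*n)"
    and eq: "pl_curve (2*n) g \<theta>1 = pl_curve (2*n) g \<theta>2"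
  shows "\<theta>1 = \<theta>2"
proof -
  have N: "0 < 2*n" using L_pos[OF L] by simp
  define c where "c = real (2*n) / (2*pi)"
  have c: "0 < c" using N by (simp add: c_def)
  have "\<bar>\<theta>1 * c - \<theta>2 * c\<bar> = \<bar>\<theta>1 - \<theta>2\<bar> * c" using c by (simp add: abs_mult left_diff_distrib[symmetric])
  also have "\<dots> < 2*pi / real (2*n) * c" using d c by (intro mult_strict_right_mono) auto
  also have "\<dots> = 1" using N by (simp add: c_def)
  finally have "\<bar>\<theta>1 * c - \<theta>2 * c\<bar> < 1" .
  moreover have "PP (2*n) g (\<theta>1 * c) = PP (2*n) g (\<theta>2 * c)"
    using eq by (simp add: pl_PP[OF N] c_def)
  ultimately have "\<theta>1 * c = \<theta>2 * c" by (rule PP_inj[OF L])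
  then show ?thesis using c by simp
qed

lemma pl_affine:
  assumes L: "lagrangian_grid n g"
  shows "\<exists>S. finite S \<and> (\<forall>\<theta>. circ_rep \<theta> \<notin> S \<longrightarrow>
     (\<exists>d U. d \<noteq> 0 \<and> open U \<and> \<theta> \<in> U \<and> (\<forall>\<theta>'\<in>U. pl_curve (2*n) g \<theta>' = pl_curve (2*n) g \<theta> + (\<theta>' - \<theta>) *\<^sub>R d)))"
proof -
  have N: "0 < 2*n" using L_pos[OF L] by simp
  define c where "c = real (2*n) / (2*pi)"
  have c: "0 < c" using N by (simp add: c_def)
  define S where "S = (\<lambda>k::nat. 2*pi*real k / real (2*n)) ` {..<2*n}"
  have pl: "pl_curve (2*n) g x = PP (2*n) g (x * c)" for x by (simp add: pl_PP[OF N] c_def)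
  show ?thesis
  proof (rule exI[of _ S], rule conjI)
    show "finite S" by (simp add: S_def)
    show "\<forall>\<theta>. circ_rep \<theta> \<notin> S \<longrightarrow>
     (\<exists>d U. d \<noteq> 0 \<and> open U \<and> \<theta> \<in> U \<and> (\<forall>\<theta>'\<in>U. pl_curve (2*n) g \<theta>' = pl_curve (2*n) g \<theta> + (\<theta>' - \<theta>) *\<^sub>R d))"
    proof (intro allI impI)
    fix \<theta> assume nS: "circ_rep \<theta> \<notin> S"
    define t where "t = \<theta> * c"
    define j where "j = \<lfloor>t\<rfloor>"
    have nint: "t \<noteq> of_int j"
    proof
      assume tj: "t = of_int j"
      define m where "m = \<lfloor>\<theta> / (2*pi)\<rfloor>"
      have cr: "circ_rep \<theta> * c = of_int (j - int (2*n) * m)"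
        using tj by (simp add: circ_rep_def t_def m_def c_def field_simps)
      define k where "k = j - int (2*n) * m"
      have "0 \<le> circ_rep \<theta> * c" using circ_rep_bounds(1)[of \<theta>] c by simp
      then have "0 \<le> (of_int k :: real)" using cr by (simp add: k_def)
      then have k0: "0 \<le> k" by simp
      have "circ_rep \<theta> * c < 2*pi*c" using circ_rep_bounds(2)[of \<theta>] c by simp
      then have "of_int k < real (2*n)" using cr N by (simp add: k_def c_def)
      then have k1: "k < int (2*n)" by linarith
      have "circ_rep \<theta> = 2*pi*real (nat k) / real (2*n)"
        using cr k0 N by (simp add: k_def c_def field_simps)
      then have "circ_rep \<theta> \<in> S" unfolding S_def using k0 k1 by (intro image_eqI[where x="nat k"]) auto
      then show False using nS by simp
    qed
    have tin: "t \<in> {of_int j <..< of_int j + 1}" using nint j_def by auto linarith+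
    define d where "d = c *\<^sub>R (GG (2*n) g (j+1) - GG (2*n) g j)"
    define U where "U = (\<lambda>x. x * c) -` {of_int j <..< of_int j + 1}"
    show "\<exists>d U. d \<noteq> 0 \<and> open U \<and> \<theta> \<in> U \<and> (\<forall>\<theta>'\<in>U. pl_curve (2*n) g \<theta>' = pl_curve (2*n) g \<theta> + (\<theta>' - \<theta>) *\<^sub>R d)"
    proof (intro exI conjI ballI)
      have "GG (2*n) g j \<noteq> GG (2*n) g (j+1)" using GG_struct[OF L, of j] by auto
      then show "d \<noteq> 0" using c by (simp add: d_def)
      show "open U" unfolding U_def
        by (rule open_vimage) (auto intro!: continuous_intros)
      show "\<theta> \<in> U" using tin by (simp add: U_def t_def)
      fix x assume "x \<in> U"
      then have "PP (2*n) g (x * c) = GG (2*n) g j + (x * c - of_int j) *\<^sub>R (GG (2*n) g (j + 1) - GG (2*n) g j)"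
        by (intro PP_affine) (simp add: U_def)
      moreover have "PP (2*n) g (\<theta> * c) = GG (2*n) g j + (\<theta> * c - of_int j) *\<^sub>R (GG (2*n) g (j + 1) - GG (2*n) g j)"
        using tin by (intro PP_affine) (simp add: t_def)
      moreover have "GG (2*n) g j + (x * c - of_int j) *\<^sub>R (GG (2*n) g (j + 1) - GG (2*n) g j)
         = (GG (2*n) g j + (\<theta> * c - of_int j) *\<^sub>R (GG (2*n) g (j + 1) - GG (2*n) g j)) + (x - \<theta>) *\<^sub>R d"
        unfolding d_def by (simp add: algebra_simps scaleR_diff_left scaleR_diff_right)
      ultimately show "pl_curve (2*n) g x = pl_curve (2*n) g \<theta> + (x - \<theta>) *\<^sub>R d"
        by (simp only: pl)
    qed
    qed
  qed
qed

lemma hc_torus_eq: "hc_torus A B = (\<lambda>p. (fst (B (snd p)), snd (A (fst p)), snd (B (snd p)), fst (A (fst p))))"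
  by (rule ext) (simp add: hc_torus_def split: prod.splits)

theorem theorem5p1:
  fixes n :: nat and M :: "label \<Rightarrow> pt4 set" and v :: "nat \<Rightarrow> pt4"
  assumes "lagrangian_hypercube n M v"
  defines "i \<equiv> hc_torus (gamma_zx n v) (gamma_wy n v)"
  shows "continuous_on UNIV i
    \<and> (\<forall>s u. i (s + 2*pi, u) = i (s, u) \<and> i (s, u + 2*pi) = i (s, u))
    \<and> (\<forall>p. \<exists>e>0. inj_on i (ball p e))
    \<and> (\<exists>S U. finite S \<and> finite U \<and>
         (\<forall>s u. circ_rep s \<notin> S \<and> circ_rep u \<notin> U \<longrightarrow>
            (\<exists>D. (i has_derivative D) (at (s, u)) \<and> inj D \<and>
                 (\<forall>a b. omega (D a) (D b) = 0))))
    \<and> (\<forall>s. proj_zx (i (s, 0)) = gamma_zx n v s)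
    \<and> (\<forall>u. proj_wy (i (0, u)) = gamma_wy n v u)"
proof -
  define A where "A = gamma_zx n v"
  define B where "B = gamma_wy n v"
  have Lw: "lagrangian_grid n (gwy_vertices n v)" and Lz: "lagrangian_grid n (gzx_vertices n v)"
    using assms(1) by (auto simp: lagrangian_hypercube_def)
  have Ad: "A = pl_curve (2*n) (gzx_vertices n v)" by (simp add: A_def gamma_zx_def)
  have Bd: "B = pl_curve (2*n) (gwy_vertices n v)" by (simp add: B_def gamma_wy_def)
  have ieq: "i = (\<lambda>p. (fst (B (snd p)), snd (A (fst p)), snd (B (snd p)), fst (A (fst p))))"
    unfolding i_def A_def B_def by (rule hc_torus_eq)
  have n: "0 < n" using L_pos[OF Lw] .
  have cA: "continuous_on UNIV A" unfolding Ad by (rule pl_cont[OF Lz])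
  have cB: "continuous_on UNIV B" unfolding Bd by (rule pl_cont[OF Lw])
  have part1: "continuous_on UNIV i"
  proof -
    have a: "continuous_on UNIV (\<lambda>p::real\<times>real. A (fst p))"
      by (rule continuous_on_compose2[OF cA]) (auto intro!: continuous_intros)
    have b: "continuous_on UNIV (\<lambda>p::real\<times>real. B (snd p))"
      by (rule continuous_on_compose2[OF cB]) (auto intro!: continuous_intros)
    show ?thesis unfolding ieq using a b by (intro continuous_intros)
  qed
  have part2: "\<forall>s u. i (s + 2*pi, u) = i (s, u) \<and> i (s, u + 2*pi) = i (s, u)"
    unfolding ieq Ad Bd by (simp add: pl_periodic[OF Lz] pl_periodic[OF Lw])
  have part3: "\<forall>p. \<exists>e>0. inj_on i (ball p e)"
  proof
    fix p :: "real \<times> real"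
    define e where "e = pi / real (2*n)"
    have e: "0 < e" using n by (simp add: e_def)
    show "\<exists>e>0. inj_on i (ball p e)"
    proof (intro exI conjI inj_onI)
      show "0 < e" by (rule e)
      fix x y assume x: "x \<in> ball p e" and y: "y \<in> ball p e" and eq: "i x = i y"
      have dxy: "dist x y < 2*pi / real (2*n)"
      proof -
        have "dist x y \<le> dist p x + dist p y" by (metis dist_commute dist_triangle)
        also have "\<dots> < e + e" using x y by (intro add_strict_mono) auto
        finally show ?thesis by (simp add: e_def)
      qed
      have d1: "\<bar>fst x - fst y\<bar> < 2*pi / real (2*n)"
        using dist_fst_le[of x y] dxy by (simp add: dist_real_def)
      have d2: "\<bar>snd x - snd y\<bar> < 2*pi / real (2*n)"
        using dist_snd_le[of x y] dxy by (simp add: dist_real_def)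
      have eA: "A (fst x) = A (fst y)" using eq unfolding ieq by (simp add: prod_eq_iff)
      have eB: "B (snd x) = B (snd y)" using eq unfolding ieq by (simp add: prod_eq_iff)
      have "fst x = fst y" using pl_inj[OF Lz d1] eA by (simp add: Ad)
      moreover have "snd x = snd y" using pl_inj[OF Lw d2] eB by (simp add: Bd)
      ultimately show "x = y" by (simp add: prod_eq_iff)
    qed
  qed
  have part4: "\<exists>S U. finite S \<and> finite U \<and>
         (\<forall>s u. circ_rep s \<notin> S \<and> circ_rep u \<notin> U \<longrightarrow>
            (\<exists>D. (i has_derivative D) (at (s, u)) \<and> inj D \<and>
                 (\<forall>a b. omega (D a) (D b) = 0)))"
  proof -
    obtain S where S: "finite S" and hS: "\<And>\<theta>. circ_rep \<theta> \<notin> S \<Longrightarrow>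
     (\<exists>d U. d \<noteq> 0 \<and> open U \<and> \<theta> \<in> U \<and> (\<forall>\<theta>'\<in>U. A \<theta>' = A \<theta> + (\<theta>' - \<theta>) *\<^sub>R d))"
      using pl_affine[OF Lz] unfolding Ad by blast
    obtain T where T: "finite T" and hT: "\<And>\<theta>. circ_rep \<theta> \<notin> T \<Longrightarrow>
     (\<exists>d U. d \<noteq> 0 \<and> open U \<and> \<theta> \<in> U \<and> (\<forall>\<theta>'\<in>U. B \<theta>' = B \<theta> + (\<theta>' - \<theta>) *\<^sub>R d))"
      using pl_affine[OF Lw] unfolding Bd by blast
    show ?thesis
    proof (rule exI[of _ S], rule exI[of _ T], intro conjI S T allI impI)
      fix s u assume su: "circ_rep s \<notin> S \<and> circ_rep u \<notin> T"
      obtain d U where d: "d \<noteq> 0" "open U" "s \<in> U" "\<forall>s'\<in>U. A s' = A s + (s' - s) *\<^sub>R d"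
        using hS su by blast
      obtain e V where e: "e \<noteq> 0" "open V" "u \<in> V" "\<forall>u'\<in>V. B u' = B u + (u' - u) *\<^sub>R e"
        using hT su by blast
      define D where "D = (\<lambda>p::real\<times>real. (snd p * fst e, fst p * snd d, snd p * snd e, fst p * fst d))"
      define F where "F = (\<lambda>p::real\<times>real. (fst (B u) + (snd p - u) * fst e, snd (A s) + (fst p - s) * snd d,
                                          snd (B u) + (snd p - u) * snd e, fst (A s) + (fst p - s) * fst d))"
      have FD: "(F has_derivative D) (at (s, u))"
        unfolding F_def D_def by (auto intro!: derivative_eq_intros)
      have "(i has_derivative D) (at (s, u))"
      proof (rule has_derivative_transform_within_open[OF FD, where s="U \<times> V"])
        show "open (U \<times> V)" using d e by (simp add: open_Times)
        show "(s, u) \<in> U \<times> V" using d e by simp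
        fix x assume "x \<in> U \<times> V"
        then have "fst x \<in> U" "snd x \<in> V" by auto
        then have a: "A (fst x) = A s + (fst x - s) *\<^sub>R d" and b: "B (snd x) = B u + (snd x - u) *\<^sub>R e"
          using d(4) e(4) by auto
        show "F x = i x" unfolding F_def ieq a b by (simp add: algebra_simps)
      qed
      moreover have "inj D"
      proof (rule injI)
        fix x y assume "D x = D y"
        then have h: "fst x * snd d = fst y * snd d" "fst x * fst d = fst y * fst d"
          "snd x * fst e = snd y * fst e" "snd x * snd e = snd y * snd e"
          by (simp_all add: D_def prod_eq_iff)
        have "fst x = fst y" using h(1,2) d(1) by (auto simp: prod_eq_iff)
        moreover have "snd x = snd y" using h(3,4) e(1) by (auto simp: prod_eq_iff)
        ultimately show "x = y" by (simp add: prod_eq_iff)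
      qed
      moreover have "\<forall>a b. omega (D a) (D b) = 0"
        by (simp add: omega_def D_def coord_def algebra_simps)
      ultimately show "\<exists>D. (i has_derivative D) (at (s, u)) \<and> inj D \<and> (\<forall>a b. omega (D a) (D b) = 0)"
        by blast
    qed
  qed
  have part5: "\<forall>s. proj_zx (i (s, 0)) = gamma_zx n v s"
    by (simp add: ieq proj_zx_def coord_def A_def)
  have part6: "\<forall>u. proj_wy (i (0, u)) = gamma_wy n v u"
    by (simp add: ieq proj_wy_def coord_def B_def)
  show ?thesis using part1 part2 part3 part4 part5 part6 by blast
qed

end
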